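(* Let $\mathbb{X},\mathbb{Y}$ be two-dimensional smooth real Banach spaces, with $\mathbb{Y}$ in addition strictly convex. Let $T\in\mathbb{L}(\mathbb{X},\mathbb{Y})$ be of rank one with $\|T\|=1$, and suppose $M_T=\{\pm x\}$. Then $T$ is an extreme contraction if and only if $(x,Tx)$ is not a CPP.
   Context: $M_T=\{x\in S_{\mathbb{X}}:\|Tx\|=\|T\|\}$. A norm one $T$ is an extreme contraction if it is an extreme point of the closed unit ball of $\mathbb{L}(\mathbb{X},\mathbb{Y})$. $B(x,r)=\{u:\|u-x\|<r\}$. $x\perp_B y$ means $\|x+\lambda y\|\ge\|x\|$ for all real $\lambda$; $x^\perp=\{y:x\perp_By\}$. For $x\in S_{\mathbb{X}}$, $y\in S_{\mathbb{Y}}$, $(x,y)$ is a CPP if there exist $r>0,\mu>0$ such that for all $z\in x^\perp\cap S_{\mathbb{X}}$, all $w\in y^\perp\cap S_{\mathbb{Y}}$ and all $a,b\in\mathbb{R}$, $ax+bz\in B(x,r)\cap S_{\mathbb{X}}$ implies $\|ay+b\mu w\|\le1$. *)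

theory Defs
  imports "HOL-Analysis.Analysis"
begin

definition bj_orth :: "'a::real_normed_vector \<Rightarrow> 'a \<Rightarrow> bool" where
  "bj_orth x y \<longleftrightarrow> (\<forall>l::real. norm (x + l *\<^sub>R y) \<ge> norm x)"

definition smooth_space :: "'a::real_normed_vector itself \<Rightarrow> bool" where
  "smooth_space _ \<longleftrightarrow>
     (\<forall>x::'a. norm x = 1 \<longrightarrow>
        (\<exists>!f::'a \<Rightarrow> real. bounded_linear f \<and> onorm f = 1 \<and> f x = 1))"

definition strictly_convex_space :: "'a::real_normed_vector itself \<Rightarrow> bool" where
  "strictly_convex_space _ \<longleftrightarrow>
     (\<forall>x y::'a. norm x = 1 \<longrightarrow> norm y = 1 \<longrightarrow> x \<noteq> y \<longrightarrow> norm ((1/2) *\<^sub>R (x + y)) < 1)"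

definition norm_att :: "('a::real_normed_vector \<Rightarrow>\<^sub>L 'b::real_normed_vector) \<Rightarrow> 'a set" where
  "norm_att T = {x. norm x = 1 \<and> norm (blinfun_apply T x) = norm T}"

definition CPP :: "'a::real_normed_vector \<Rightarrow> 'b::real_normed_vector \<Rightarrow> bool" where
  "CPP x y \<longleftrightarrow> norm x = 1 \<and> norm y = 1 \<and>
     (\<exists>r>0. \<exists>\<mu>>0. \<forall>z w. \<forall>a b::real.
        bj_orth x z \<longrightarrow> norm z = 1 \<longrightarrow> bj_orth y w \<longrightarrow> norm w = 1 \<longrightarrow>
        a *\<^sub>R x + b *\<^sub>R z \<in> ball x r \<longrightarrow> norm (a *\<^sub>R x + b *\<^sub>R z) = 1 \<longrightarrow>
        norm (a *\<^sub>R y + (b * \<mu>) *\<^sub>R w) \<le> 1)"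

end

theory Submission
  imports Defs
begin


lemma dim2_indep_card:
  fixes S :: "'a::real_vector set"
  assumes "dim (UNIV::'a set) = 2" "independent S"
  shows "finite S \<and> card S \<le> 2"
proof -
  obtain B where B: "B \<subseteq> (UNIV::'a set)" "independent B" "UNIV \<subseteq> span B" "card B = dim (UNIV::'a set)"
    by (rule real_vector.basis_exists)
  then have "finite B" using assms by (metis card.infinite zero_neq_numeral)
  moreover have "S \<subseteq> span B" using B(3) by blast
  ultimately show ?thesis using real_vector.independent_span_bound[OF _ assms(2), of B] B assms by metis
qed

lemma dim2_exists_notin:
  fixes x :: "'a::real_vector"
  assumes "dim (UNIV::'a set) = 2"
  shows "\<exists>v. v \<notin> span {x}"
proof (rule ccontr)
  assume "\<not> ?thesis"
  then have "UNIV \<subseteq> span {x}" by auto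
  then have "dim (UNIV::'a set) \<le> card {x}" by (rule real_vector.dim_le_card) auto
  then show False using assms by simp
qed

lemma dim2_span2:
  fixes x z :: "'a::real_vector"
  assumes "dim (UNIV::'a set) = 2" "independent {x, z}" "x \<noteq> z"
  shows "u \<in> span {x, z}"
proof (rule ccontr)
  assume u: "u \<notin> span {x, z}"
  then have "independent (insert u {x, z})" using assms(2) by (rule real_vector.independent_insertI)
  moreover have "u \<notin> {x, z}" using u real_vector.span_base by blast
  ultimately have "card (insert u {x, z}) \<le> 2" using dim2_indep_card[OF assms(1)] by blast
  then show False using \<open>u \<notin> {x, z}\<close> assms(3) by simp
qed



lemma smooth_setup:
  fixes x :: "'a::real_normed_vector"
  assumes dim2: "dim (UNIV::'a set) = 2" and sm: "smooth_space TYPE('a)" and nx: "norm x = 1"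
  obtains \<phi> z0 \<beta> where "bounded_linear (\<phi>::'a\<Rightarrow>real)" "onorm \<phi> = 1" "\<phi> x = 1"
    "\<And>f. bounded_linear f \<Longrightarrow> onorm f = 1 \<Longrightarrow> f x = 1 \<Longrightarrow> f = \<phi>"
    "norm z0 = 1" "\<phi> z0 = 0" "linear \<beta>" "\<And>u. u = \<phi> u *\<^sub>R x + \<beta> u *\<^sub>R z0"
    "\<And>u. \<bar>\<phi> u\<bar> \<le> norm u" "\<And>u. \<bar>\<beta> u\<bar> \<le> 2 * norm u"
    "\<beta> x = 0" "\<beta> z0 = 1"
    "\<And>z. bj_orth x z \<longleftrightarrow> \<phi> z = 0"
proof -
  have "\<exists>!f::'a\<Rightarrow>real. bounded_linear f \<and> onorm f = 1 \<and> f x = 1"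
    using sm nx unfolding smooth_space_def by simp
  then obtain \<phi> :: "'a \<Rightarrow> real" where \<phi>all: "(bounded_linear \<phi> \<and> onorm \<phi> = 1 \<and> \<phi> x = 1) \<and>
      (\<forall>f. (bounded_linear f \<and> onorm f = 1 \<and> f x = 1) \<longrightarrow> f = \<phi>)"
    unfolding Ex1_def by blast
  have \<phi>: "bounded_linear \<phi>" "onorm \<phi> = 1" "\<phi> x = 1" using \<phi>all by auto
  have uniq: "\<And>f. bounded_linear f \<and> onorm f = 1 \<and> f x = 1 \<Longrightarrow> f = \<phi>" using \<phi>all by auto
  interpret \<phi>: bounded_linear \<phi> by fact
  have phib: "\<bar>\<phi> u\<bar> \<le> norm u" for u using onorm[OF \<phi>(1), of u] \<phi>(2) by simp
  obtain v where v: "v \<notin> span {x}" using dim2_exists_notin[OF dim2] by blast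
  define v' where "v' = v - \<phi> v *\<^sub>R x"
  have "v' \<noteq> 0"
  proof
    assume "v' = 0"
    then have "v = \<phi> v *\<^sub>R x" unfolding v'_def by (metis right_minus_eq)
    then have "v \<in> span {x}" by (metis real_vector.span_base real_vector.span_scale singletonI)
    then show False using v by simp
  qed
  define z0 where "z0 = v' /\<^sub>R norm v'"
  have nz0: "norm z0 = 1" using \<open>v' \<noteq> 0\<close> unfolding z0_def by simp
  have "\<phi> v' = 0" unfolding v'_def using \<phi>(3) by (simp add: \<phi>.diff \<phi>.scaleR)
  then have pz0: "\<phi> z0 = 0" unfolding z0_def by (simp add: \<phi>.scaleR)
  have z0ne: "z0 \<noteq> 0" using nz0 by auto
  have "x \<notin> span {z0}"
  proof
    assume "x \<in> span {z0}"
    then obtain k where "x = k *\<^sub>R z0" unfolding real_vector.span_singleton by auto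
    then have "\<phi> x = 0" using pz0 by (simp add: \<phi>.scaleR)
    then show False using \<phi>(3) by simp
  qed
  moreover have "independent {z0}" using z0ne by (simp add: real_vector.independent_insert)
  ultimately have ind: "independent {x, z0}" by (rule real_vector.independent_insertI)
  have xz: "x \<noteq> z0" using \<phi>(3) pz0 by auto
  have rep: "\<exists>b. u = \<phi> u *\<^sub>R x + b *\<^sub>R z0" for u
  proof -
    have "u \<in> span (insert x {z0})" using dim2_span2[OF dim2 ind xz] by simp
    then obtain k where "u - k *\<^sub>R x \<in> span {z0}" unfolding real_vector.span_insert by auto
    then obtain b where b: "u - k *\<^sub>R x = b *\<^sub>R z0" unfolding real_vector.span_singleton by auto
    then have u: "u = k *\<^sub>R x + b *\<^sub>R z0" by (simp add: algebra_simps)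
    then have "\<phi> u = k" using \<phi>(3) pz0 by (simp add: \<phi>.add \<phi>.scaleR)
    then show ?thesis using u by auto
  qed
  define \<beta> where "\<beta> u = (SOME b. u = \<phi> u *\<^sub>R x + b *\<^sub>R z0)" for u
  have brep: "u = \<phi> u *\<^sub>R x + \<beta> u *\<^sub>R z0" for u
    unfolding \<beta>_def using someI_ex[OF rep[of u]] .
  have brep': "\<phi> u *\<^sub>R x + \<beta> u *\<^sub>R z0 = u" for u using brep[of u] by metis
  have buniq: "\<beta> u = b" if "u = a *\<^sub>R x + b *\<^sub>R z0" for u a b
  proof -
    have "\<phi> u = a" using that \<phi>(3) pz0 by (simp add: \<phi>.add \<phi>.scaleR)
    then have "a *\<^sub>R x + \<beta> u *\<^sub>R z0 = a *\<^sub>R x + b *\<^sub>R z0" using brep'[of u] that by metis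
    then have "\<beta> u *\<^sub>R z0 = b *\<^sub>R z0" by simp
    then show ?thesis using z0ne by simp
  qed
  have lb: "linear \<beta>"
  proof (rule linearI)
    fix u w
    have "(\<phi> u + \<phi> w) *\<^sub>R x + (\<beta> u + \<beta> w) *\<^sub>R z0
       = (\<phi> u *\<^sub>R x + \<beta> u *\<^sub>R z0) + (\<phi> w *\<^sub>R x + \<beta> w *\<^sub>R z0)"
      by (simp add: algebra_simps)
    also have "\<dots> = u + w" by (simp only: brep')
    finally have "u + w = (\<phi> u + \<phi> w) *\<^sub>R x + (\<beta> u + \<beta> w) *\<^sub>R z0" by simp
    then show "\<beta> (u + w) = \<beta> u + \<beta> w" by (rule buniq)
  next
    fix c :: real and u
    have "c *\<^sub>R u = (c * \<phi> u) *\<^sub>R x + (c * \<beta> u) *\<^sub>R z0"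
      using brep[of u] by (metis scaleR_add_right scaleR_scaleR)
    then show "\<beta> (c *\<^sub>R u) = c *\<^sub>R \<beta> u" using buniq by simp
  qed
  have bb: "\<bar>\<beta> u\<bar> \<le> 2 * norm u" for u
  proof -
    have "\<beta> u *\<^sub>R z0 = u - \<phi> u *\<^sub>R x" using brep'[of u] by (metis add_diff_cancel_left')
    then have "\<bar>\<beta> u\<bar> = norm (u - \<phi> u *\<^sub>R x)" using nz0 by (metis mult.right_neutral norm_scaleR)
    also have "\<dots> \<le> norm u + \<bar>\<phi> u\<bar>" using norm_triangle_ineq4[of u "\<phi> u *\<^sub>R x"] nx by simp
    finally show ?thesis using phib[of u] by simp
  qed
  have bx: "\<beta> x = 0" by (rule buniq[of x 1]) simp
  have bz: "\<beta> z0 = 1" by (rule buniq[of z0 0]) simp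
  have bj: "bj_orth x z \<longleftrightarrow> \<phi> z = 0" for z
  proof
    assume "\<phi> z = 0"
    then show "bj_orth x z" unfolding bj_orth_def
    proof (intro allI)
      fix l :: real
      have "\<phi> (x + l *\<^sub>R z) = 1" using \<open>\<phi> z = 0\<close> \<phi>(3) by (simp add: \<phi>.add \<phi>.scaleR)
      then show "norm x \<le> norm (x + l *\<^sub>R z)" using phib[of "x + l *\<^sub>R z"] nx by simp
    qed
  next
    assume o: "bj_orth x z"
    show "\<phi> z = 0"
    proof (rule ccontr)
      define p where "p = \<phi> z"
      define q where "q = \<beta> z"
      assume "\<phi> z \<noteq> 0"
      then have p0: "p \<noteq> 0" by (simp add: p_def)
      have zr: "z = p *\<^sub>R x + q *\<^sub>R z0" using brep[of z] by (simp add: p_def q_def)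
      show False
      proof (cases "q = 0")
        case True
        then have "x + (- 1 / p) *\<^sub>R z = 0" using zr p0 by simp
        then show False using o nx unfolding bj_orth_def by (metis norm_zero zero_neq_one order.antisym norm_ge_zero)
      next
        case False
        define g where "g u = \<phi> u - (p / q) * \<beta> u" for u
        have ug: "u = g u *\<^sub>R x + (\<beta> u / q) *\<^sub>R z" for u
        proof -
          have "g u *\<^sub>R x + (\<beta> u / q) *\<^sub>R z = (g u + \<beta> u / q * p) *\<^sub>R x + (\<beta> u / q * q) *\<^sub>R z0"
            unfolding zr by (simp add: algebra_simps)
          also have "\<dots> = \<phi> u *\<^sub>R x + \<beta> u *\<^sub>R z0" using False unfolding g_def by simp
          finally show ?thesis using brep'[of u] by simp
        qed
        have ug': "g u *\<^sub>R x + (\<beta> u / q) *\<^sub>R z = u" for u using ug[of u] by metis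
        have gb: "\<bar>g u\<bar> \<le> norm u" for u
        proof (cases "g u = 0")
          case True then show ?thesis by simp
        next
          case gn: False
          have "g u *\<^sub>R (x + (\<beta> u / (q * g u)) *\<^sub>R z) = g u *\<^sub>R x + (\<beta> u / q) *\<^sub>R z"
            using gn by (simp add: algebra_simps)
          then have "u = g u *\<^sub>R (x + (\<beta> u / (q * g u)) *\<^sub>R z)" using ug'[of u] by simp
          then have "norm u = \<bar>g u\<bar> * norm (x + (\<beta> u / (q * g u)) *\<^sub>R z)"
            by (metis norm_scaleR)
          moreover have "norm (x + (\<beta> u / (q * g u)) *\<^sub>R z) \<ge> 1"
            using o nx unfolding bj_orth_def by metis
          ultimately show ?thesis by (metis abs_ge_zero mult_le_cancel_left1 not_le)
        qed
        interpret lb: linear \<beta> by fact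
        have blg: "bounded_linear g"
        proof (rule bounded_linear_intro[where K=1])
          show "g (u + w) = g u + g w" for u w unfolding g_def by (simp add: \<phi>.add lb.add algebra_simps)
          show "g (r *\<^sub>R u) = r *\<^sub>R g u" for r u unfolding g_def by (simp add: \<phi>.scaleR lb.scale algebra_simps)
          show "norm (g u) \<le> norm u * 1" for u using gb[of u] by simp
        qed
        have gx: "g x = 1" unfolding g_def using \<phi>(3) bx by simp
        have "onorm g \<le> 1" using gb by (intro onorm_bound) auto
        moreover have "onorm g \<ge> 1" using le_onorm[OF blg, of x] gx nx by simp
        ultimately have "g = \<phi>" using uniq blg gx by auto
        then have "g z0 = \<phi> z0" by simp
        then show False using bz False p0 unfolding g_def by simp
      qed
    qed
  qed
  show ?thesis
    apply (rule that[OF \<phi> _ nz0 pz0 lb brep phib bb bx bz bj])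
    using uniq by blast
qed



lemma conv_ball:
  fixes a b :: "'c::real_normed_vector"
  assumes "norm a \<le> 1" "norm b \<le> 1" "0 \<le> s" "s \<le> 1"
  shows "norm ((1 - s) *\<^sub>R a + s *\<^sub>R b) \<le> 1"
proof -
  have "norm ((1 - s) *\<^sub>R a + s *\<^sub>R b) \<le> norm ((1 - s) *\<^sub>R a) + norm (s *\<^sub>R b)"
    by (rule norm_triangle_ineq)
  also have "\<dots> = (1 - s) * norm a + s * norm b" using assms by simp
  also have "\<dots> \<le> (1 - s) * 1 + s * 1"
    using assms by (intro add_mono mult_left_mono) auto
  finally show ?thesis by simp
qed

lemma conv_pm:
  fixes A B :: "'c::real_normed_vector"
  assumes "norm (A + B) \<le> 1" "norm (A - B) \<le> 1" "\<bar>t\<bar> \<le> 1"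
  shows "norm (A + t *\<^sub>R B) \<le> 1"
proof -
  have e: "(1 - s) *\<^sub>R (A - B) + s *\<^sub>R (A + B) = A + (2 * s - 1) *\<^sub>R B" for s :: real
    by (simp add: algebra_simps flip: scaleR_2 scaleR_add_left)
  have "A + t *\<^sub>R B = (1 - (1 + t) / 2) *\<^sub>R (A - B) + ((1 + t) / 2) *\<^sub>R (A + B)"
    unfolding e by (simp add: field_simps)
  moreover have "norm ((1 - (1 + t) / 2) *\<^sub>R (A - B) + ((1 + t) / 2) *\<^sub>R (A + B)) \<le> 1"
    using assms by (intro conv_ball) auto
  ultimately show ?thesis by simp
qed



theorem mainTheorem8:
  fixes T :: "'a::banach \<Rightarrow>\<^sub>L 'b::banach" and x :: 'a
  assumes "dim (UNIV :: 'a set) = 2" and "dim (UNIV :: 'b set) = 2"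
    and "smooth_space TYPE('a)" and "smooth_space TYPE('b)"
    and "strictly_convex_space TYPE('b)"
    and "dim (range (blinfun_apply T)) = 1"
    and "norm T = 1"
    and "norm_att T = {x, -x}"
  shows "T extreme_point_of (cball 0 1) \<longleftrightarrow> \<not> CPP x (blinfun_apply T x)"
proof -
  note dA = assms(1) and dB = assms(2) and smA = assms(3) and smB = assms(4)
    and sc = assms(5) and rk = assms(6) and nT = assms(7) and att = assms(8)
  have "x \<in> norm_att T" using att by auto
  then have nx: "norm x = 1" and ny: "norm (blinfun_apply T x) = 1"
    using nT by (auto simp: norm_att_def)
  define y where "y = blinfun_apply T x"
  have ny': "norm y = 1" using ny by (simp add: y_def)
  obtain \<phi> z0 \<beta> where \<phi>bl: "bounded_linear (\<phi>::'a\<Rightarrow>real)" and \<phi>n: "onorm \<phi> = 1" and \<phi>x: "\<phi> x = 1"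
    and \<phi>u: "\<And>f. bounded_linear f \<Longrightarrow> onorm f = 1 \<Longrightarrow> f x = 1 \<Longrightarrow> f = \<phi>"
    and nz0: "norm z0 = 1" and \<phi>z0: "\<phi> z0 = 0" and lb: "linear \<beta>"
    and brep: "\<And>u. u = \<phi> u *\<^sub>R x + \<beta> u *\<^sub>R z0"
    and phib: "\<And>u. \<bar>\<phi> u\<bar> \<le> norm u" and bb: "\<And>u. \<bar>\<beta> u\<bar> \<le> 2 * norm u"
    and bx: "\<beta> x = 0" and bz: "\<beta> z0 = 1"
    and bjX: "\<And>z. bj_orth x z \<longleftrightarrow> \<phi> z = 0"
    apply (rule smooth_setup[OF dA smA nx])
    apply (rule that)
    apply assumption+
    done
  obtain \<psi> w0 \<gamma> where \<psi>bl: "bounded_linear (\<psi>::'b\<Rightarrow>real)" and \<psi>n: "onorm \<psi> = 1" and \<psi>y: "\<psi> y = 1"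
    and \<psi>u: "\<And>f. bounded_linear f \<Longrightarrow> onorm f = 1 \<Longrightarrow> f y = 1 \<Longrightarrow> f = \<psi>"
    and nw0: "norm w0 = 1" and \<psi>w0: "\<psi> w0 = 0" and lg: "linear \<gamma>"
    and grep: "\<And>u. u = \<psi> u *\<^sub>R y + \<gamma> u *\<^sub>R w0"
    and psib: "\<And>u. \<bar>\<psi> u\<bar> \<le> norm u" and gb: "\<And>u. \<bar>\<gamma> u\<bar> \<le> 2 * norm u"
    and gy: "\<gamma> y = 0" and gw: "\<gamma> w0 = 1"
    and bjY: "\<And>w. bj_orth y w \<longleftrightarrow> \<psi> w = 0"
    apply (rule smooth_setup[OF dB smB ny'])
    apply (rule that)
    apply assumption+
    done
  interpret \<phi>: bounded_linear \<phi> by fact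
  interpret \<psi>: bounded_linear \<psi> by fact
  interpret \<beta>: linear \<beta> by fact
  interpret \<gamma>: linear \<gamma> by fact
  have brep': "\<phi> u *\<^sub>R x + \<beta> u *\<^sub>R z0 = u" for u using brep[of u] by metis
  have grep': "\<psi> u *\<^sub>R y + \<gamma> u *\<^sub>R w0 = u" for u using grep[of u] by metis
  have Tb: "norm (blinfun_apply T u) \<le> norm u" for u using norm_blinfun[of T u] nT by simp
  have y0: "y \<noteq> 0" using ny' by auto
  have Tspan: "blinfun_apply T u \<in> span {y}" for u
  proof (rule ccontr)
    assume nin: "blinfun_apply T u \<notin> span {y}"
    have "independent {y}" using y0 by (simp add: real_vector.independent_insert)
    then have ind: "independent {blinfun_apply T u, y}" by (rule real_vector.independent_insertI[OF nin])
    have ne: "blinfun_apply T u \<noteq> y" using nin real_vector.span_base by blast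
    obtain B where B: "B \<subseteq> range (blinfun_apply T)" "independent B"
      "range (blinfun_apply T) \<subseteq> span B" "card B = dim (range (blinfun_apply T))"
      by (rule real_vector.basis_exists)
    have fB: "finite B" using B(4) rk by (metis card.infinite zero_neq_one)
    have "{blinfun_apply T u, y} \<subseteq> span B" using B(3) unfolding y_def by auto
    then have "card {blinfun_apply T u, y} \<le> card B"
      using real_vector.independent_span_bound[OF fB ind] by blast
    then show False using ne B(4) rk by simp
  qed
  have TrepPsi: "blinfun_apply T u = \<psi> (blinfun_apply T u) *\<^sub>R y" for u
  proof -
    obtain k where k: "blinfun_apply T u = k *\<^sub>R y" using Tspan[of u] unfolding real_vector.span_singleton by auto
    then have "\<psi> (blinfun_apply T u) = k" using \<psi>y by (simp add: \<psi>.scaleR)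
    then show ?thesis using k by simp
  qed
  have \<phi>eq: "(\<lambda>u. \<psi> (blinfun_apply T u)) = \<phi>"
  proof (rule \<phi>u)
    show bl: "bounded_linear (\<lambda>u. \<psi> (blinfun_apply T u))"
      by (rule bounded_linear_compose[OF \<psi>bl blinfun.bounded_linear_right])
    have le: "norm (\<psi> (blinfun_apply T u)) \<le> 1 * norm u" for u
      using psib[of "blinfun_apply T u"] Tb[of u] by simp
    have "onorm (\<lambda>u. \<psi> (blinfun_apply T u)) \<le> 1" by (rule onorm_bound) (use le in auto)
    moreover have "1 \<le> onorm (\<lambda>u. \<psi> (blinfun_apply T u))"
      using le_onorm[OF bl, of x] \<psi>y nx unfolding y_def by simp
    ultimately show "onorm (\<lambda>u. \<psi> (blinfun_apply T u)) = 1" by simp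
    show "\<psi> (blinfun_apply T x) = 1" using \<psi>y unfolding y_def .
  qed
  have TT: "blinfun_apply T u = \<phi> u *\<^sub>R y" for u
    using TrepPsi[of u] \<phi>eq by metis
  have Tcb: "T \<in> cball 0 1" using nT by simp
  have notext_cpp: "CPP x y" if ne: "\<not> T extreme_point_of (cball 0 1)"
  proof -
    obtain a b where ab: "a \<in> cball 0 1" "b \<in> cball 0 1" "T \<in> open_segment a b"
      using ne Tcb unfolding extreme_point_of_def by blast
    then obtain t where t: "a \<noteq> b" "0 < t" "t < 1" "T = (1 - t) *\<^sub>R a + t *\<^sub>R b"
      unfolding in_segment by blast
    define m where "m = min t (1 - t)"
    have m: "0 < m" "m \<le> t" "m \<le> 1 - t" using t unfolding m_def by auto
    define S where "S = m *\<^sub>R (b - a)"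
    have na: "norm a \<le> 1" and nb: "norm b \<le> 1" using ab by auto
    have "T + S = (1 - (t + m)) *\<^sub>R a + (t + m) *\<^sub>R b"
      unfolding S_def t(4) by (simp add: algebra_simps)
    then have nTS1: "norm (T + S) \<le> 1" using conv_ball[OF na nb, of "t + m"] m t by simp
    have "T - S = (1 - (t - m)) *\<^sub>R a + (t - m) *\<^sub>R b"
      unfolding S_def t(4) by (simp add: algebra_simps)
    then have nTS2: "norm (T - S) \<le> 1" using conv_ball[OF na nb, of "t - m"] m t by simp
    have S0: "S \<noteq> 0" using m t unfolding S_def by simp
    have b1: "norm (blinfun_apply T u + blinfun_apply S u) \<le> norm u" for u
      using norm_blinfun[of "T + S" u] nTS1 mult_right_mono[OF nTS1 norm_ge_zero[of u]]
      by (simp add: blinfun.add_left)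
    have b2: "norm (blinfun_apply T u - blinfun_apply S u) \<le> norm u" for u
      using norm_blinfun[of "T - S" u] mult_right_mono[OF nTS2 norm_ge_zero[of u]]
      by (simp add: blinfun.diff_left)
    have Sx: "blinfun_apply S x = 0"
    proof (rule ccontr)
      assume Sx0: "blinfun_apply S x \<noteq> 0"
      define p where "p = y + blinfun_apply S x"
      define q where "q = y - blinfun_apply S x"
      have np: "norm p \<le> 1" using b1[of x] nx unfolding p_def y_def by simp
      have nq: "norm q \<le> 1" using b2[of x] nx unfolding q_def y_def by simp
      have pq: "p + q = 2 *\<^sub>R y" unfolding p_def q_def by (simp add: scaleR_2)
      have "2 = norm (p + q)" using ny' pq by simp
      also have "\<dots> \<le> norm p + norm q" by (rule norm_triangle_ineq)
      finally have "norm p = 1" "norm q = 1" using np nq by auto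
      moreover have "p \<noteq> q"
      proof
        assume "p = q"
        moreover have "p - q = 2 *\<^sub>R blinfun_apply S x" unfolding p_def q_def by (simp add: scaleR_2)
        ultimately show False using Sx0 by simp
      qed
      ultimately have "norm ((1/2) *\<^sub>R (p + q)) < 1" using sc unfolding strictly_convex_space_def by blast
      then show False using pq ny' by simp
    qed
    have chi: "(\<lambda>u. \<psi> (blinfun_apply T u + blinfun_apply S u)) = \<phi>"
    proof (rule \<phi>u)
      have "bounded_linear (\<lambda>u. \<psi> (blinfun_apply (T + S) u))"
        by (rule bounded_linear_compose[OF \<psi>bl blinfun.bounded_linear_right])
      then show bl: "bounded_linear (\<lambda>u. \<psi> (blinfun_apply T u + blinfun_apply S u))"
        by (simp add: blinfun.add_left)
      have le: "norm (\<psi> (blinfun_apply T u + blinfun_apply S u)) \<le> 1 * norm u" for u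
        using psib[of "blinfun_apply T u + blinfun_apply S u"] b1[of u] by simp
      have "onorm (\<lambda>u. \<psi> (blinfun_apply T u + blinfun_apply S u)) \<le> 1" by (rule onorm_bound) (use le in auto)
      moreover have "1 \<le> onorm (\<lambda>u. \<psi> (blinfun_apply T u + blinfun_apply S u))"
        using le_onorm[OF bl, of x] \<psi>y nx Sx unfolding y_def by simp
      ultimately show "onorm (\<lambda>u. \<psi> (blinfun_apply T u + blinfun_apply S u)) = 1" by simp
      show "\<psi> (blinfun_apply T x + blinfun_apply S x) = 1" using \<psi>y Sx unfolding y_def by simp
    qed
    have psiS: "\<psi> (blinfun_apply S u) = 0" for u
    proof -
      have "\<psi> (blinfun_apply T u + blinfun_apply S u) = \<phi> u" using chi by metis
      then show ?thesis using TT[of u] \<psi>y by (simp add: \<psi>.add \<psi>.scaleR)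
    qed
    have Sw: "blinfun_apply S u = \<gamma> (blinfun_apply S u) *\<^sub>R w0" for u
      using grep'[of "blinfun_apply S u"] psiS[of u] by simp
    define c where "c = \<gamma> (blinfun_apply S z0)"
    have Su: "blinfun_apply S u = (\<beta> u * c) *\<^sub>R w0" for u
    proof -
      have "blinfun_apply S u = blinfun_apply S (\<phi> u *\<^sub>R x + \<beta> u *\<^sub>R z0)" using brep'[of u] by simp
      also have "\<dots> = \<beta> u *\<^sub>R blinfun_apply S z0" using Sx by (simp add: blinfun.add_right blinfun.scaleR_right)
      also have "\<dots> = (\<beta> u * c) *\<^sub>R w0" using Sw[of z0] unfolding c_def by (metis scaleR_scaleR)
      finally show ?thesis .
    qed
    have c0: "c \<noteq> 0"
    proof
      assume "c = 0"
      then have "S = 0" using Su by (intro blinfun_eqI) simp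
      then show False using S0 by simp
    qed
    have main: "norm (a *\<^sub>R y + (bb * \<bar>c\<bar>) *\<^sub>R w) \<le> 1"
      if oz: "bj_orth x z" and nz: "norm z = 1" and ow: "bj_orth y w" and nw: "norm w = 1"
        and nu: "norm (a *\<^sub>R x + bb *\<^sub>R z) = 1" for z w and a bb :: real
    proof -
      have \<phi>z: "\<phi> z = 0" using oz bjX by simp
      have zr: "z = \<beta> z *\<^sub>R z0" using brep'[of z] \<phi>z by simp
      have abz: "\<bar>\<beta> z\<bar> = 1" using nz nz0 zr by (metis mult.right_neutral norm_scaleR)
      have \<psi>w: "\<psi> w = 0" using ow bjY by simp
      have wr: "w = \<gamma> w *\<^sub>R w0" using grep'[of w] \<psi>w by simp
      have agw: "\<bar>\<gamma> w\<bar> = 1" using nw nw0 wr by (metis mult.right_neutral norm_scaleR)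
      define u where "u = a *\<^sub>R x + bb *\<^sub>R z"
      have \<phi>uu: "\<phi> u = a" unfolding u_def using \<phi>x \<phi>z by (simp add: \<phi>.add \<phi>.scaleR)
      have \<beta>uu: "\<beta> u = bb * \<beta> z" unfolding u_def using bx by (simp add: \<beta>.add \<beta>.scale)
      define k where "k = bb * \<beta> z * c"
      have e1: "norm (a *\<^sub>R y + k *\<^sub>R w0) \<le> 1"
        using b1[of u] nu TT[of u] Su[of u] \<phi>uu \<beta>uu unfolding u_def k_def by simp
      have e2: "norm (a *\<^sub>R y - k *\<^sub>R w0) \<le> 1"
        using b2[of u] nu TT[of u] Su[of u] \<phi>uu \<beta>uu unfolding u_def k_def by simp
      have "(bb * \<bar>c\<bar>) *\<^sub>R w = (bb * \<bar>c\<bar> * \<gamma> w) *\<^sub>R w0" using wr by (metis scaleR_scaleR)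
      moreover have "\<bar>bb * \<bar>c\<bar> * \<gamma> w\<bar> = \<bar>k\<bar>" unfolding k_def using abz agw by (simp add: abs_mult)
      then have "bb * \<bar>c\<bar> * \<gamma> w = k \<or> bb * \<bar>c\<bar> * \<gamma> w = - k" by linarith
      ultimately show "norm (a *\<^sub>R y + (bb * \<bar>c\<bar>) *\<^sub>R w) \<le> 1" using e1 e2 by auto
    qed
    have "\<exists>\<mu>>0. \<forall>z w. \<forall>a b::real.
        bj_orth x z \<longrightarrow> norm z = 1 \<longrightarrow> bj_orth y w \<longrightarrow> norm w = 1 \<longrightarrow>
        a *\<^sub>R x + b *\<^sub>R z \<in> ball x 1 \<longrightarrow> norm (a *\<^sub>R x + b *\<^sub>R z) = 1 \<longrightarrow>
        norm (a *\<^sub>R y + (b * \<mu>) *\<^sub>R w) \<le> 1"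
      by (rule exI[of _ "\<bar>c\<bar>"]) (use c0 main in auto)
    then show "CPP x y" unfolding CPP_def using nx ny' zero_less_one[where 'a=real] by blast
  qed
  have cpp_notext: "\<not> T extreme_point_of (cball 0 1)" if cpp: "CPP x y"
  proof -
    obtain r \<mu> where r: "r > 0" and \<mu>: "\<mu> > 0" and H: "\<forall>z w. \<forall>a b::real.
        bj_orth x z \<longrightarrow> norm z = 1 \<longrightarrow> bj_orth y w \<longrightarrow> norm w = 1 \<longrightarrow>
        a *\<^sub>R x + b *\<^sub>R z \<in> ball x r \<longrightarrow> norm (a *\<^sub>R x + b *\<^sub>R z) = 1 \<longrightarrow>
        norm (a *\<^sub>R y + (b * \<mu>) *\<^sub>R w) \<le> 1"
      using cpp unfolding CPP_def by blast
    have oz0: "bj_orth x z0" using bjX \<phi>z0 by simp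
    have ow0: "bj_orth y w0" using bjY \<psi>w0 by simp
    have ow0': "bj_orth y (- w0)" using bjY \<psi>w0 by (simp add: \<psi>.neg)
    have nmw0: "norm (- w0) = 1" using nw0 by simp
    have loc: "norm (\<phi> u *\<^sub>R y + (\<beta> u * \<mu>) *\<^sub>R w0) \<le> 1 \<and> norm (\<phi> u *\<^sub>R y - (\<beta> u * \<mu>) *\<^sub>R w0) \<le> 1"
      if "dist x u < r" "norm u = 1" for u
    proof -
      have inb: "\<phi> u *\<^sub>R x + \<beta> u *\<^sub>R z0 \<in> ball x r" using that brep'[of u] by simp
      have nn: "norm (\<phi> u *\<^sub>R x + \<beta> u *\<^sub>R z0) = 1" using that brep'[of u] by simp
      have "norm (\<phi> u *\<^sub>R y + (\<beta> u * \<mu>) *\<^sub>R w0) \<le> 1"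
        using H oz0 nz0 ow0 nw0 inb nn by blast
      moreover have "norm (\<phi> u *\<^sub>R y + (\<beta> u * \<mu>) *\<^sub>R (- w0)) \<le> 1"
        using H oz0 nz0 ow0' nmw0 inb nn by blast
      ultimately show ?thesis by simp
    qed
    have loc2: "norm (\<phi> u *\<^sub>R y + (\<beta> u * \<mu>) *\<^sub>R w0) \<le> 1 \<and> norm (\<phi> u *\<^sub>R y - (\<beta> u * \<mu>) *\<^sub>R w0) \<le> 1"
      if "dist x u < r \<or> dist (- x) u < r" "norm u = 1" for u
    proof (cases "dist x u < r")
      case True then show ?thesis using loc that by blast
    next
      case False
      then have "dist x (- u) < r" using that by (simp add: dist_norm norm_minus_commute add.commute)
      then have L: "norm (\<phi> (- u) *\<^sub>R y + (\<beta> (- u) * \<mu>) *\<^sub>R w0) \<le> 1 \<and> norm (\<phi> (- u) *\<^sub>R y - (\<beta> (- u) * \<mu>) *\<^sub>R w0) \<le> 1"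
        using loc[of "- u"] that by simp
      have e1: "\<phi> (- u) *\<^sub>R y + (\<beta> (- u) * \<mu>) *\<^sub>R w0 = - (\<phi> u *\<^sub>R y + (\<beta> u * \<mu>) *\<^sub>R w0)"
        by (simp add: \<phi>.neg \<beta>.neg)
      have e2: "\<phi> (- u) *\<^sub>R y - (\<beta> (- u) * \<mu>) *\<^sub>R w0 = - (\<phi> u *\<^sub>R y - (\<beta> u * \<mu>) *\<^sub>R w0)"
        by (simp add: \<phi>.neg \<beta>.neg)
      show ?thesis using L unfolding e1 e2 norm_minus_cancel .
    qed
    define L where "L p = fst p *\<^sub>R x + snd p *\<^sub>R z0" for p :: "real \<times> real"
    have contL: "continuous_on UNIV L" unfolding L_def by (intro continuous_intros)
    define K where "K = ({-1..1} \<times> {-2..2}) \<inter> {p. norm (L p) = 1 \<and> r \<le> dist x (L p) \<and> r \<le> dist (- x) (L p)}"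
    have "closed {p. norm (L p) = 1 \<and> r \<le> dist x (L p) \<and> r \<le> dist (- x) (L p)}"
      unfolding L_def by (intro closed_Collect_conj closed_Collect_eq closed_Collect_le continuous_intros)
    then have cK: "compact K" unfolding K_def
      by (intro compact_Int_closed compact_Times compact_Icc)
    have \<phi>L: "\<phi> (L p) = fst p" for p unfolding L_def using \<phi>x \<phi>z0 by (simp add: \<phi>.add \<phi>.scaleR)
    have gap: "\<bar>fst p\<bar> < 1" if "p \<in> K" for p
    proof (rule ccontr)
      assume "\<not> \<bar>fst p\<bar> < 1"
      moreover have nL: "norm (L p) = 1" using that unfolding K_def by auto
      moreover have "\<bar>fst p\<bar> \<le> 1" using phib[of "L p"] \<phi>L[of p] nL by simp
      ultimately have a1: "\<bar>\<phi> (L p)\<bar> = 1" using \<phi>L[of p] by simp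
      have "norm (blinfun_apply T (L p)) = norm T" using TT[of "L p"] a1 ny' nT by simp
      then have "L p \<in> norm_att T" using nL unfolding norm_att_def by simp
      then have "L p = x \<or> L p = - x" using att by simp
      then show False using that r unfolding K_def by auto
    qed
    obtain \<delta> where \<delta>: "\<delta> > 0" "\<And>p. p \<in> K \<Longrightarrow> \<bar>fst p\<bar> \<le> 1 - \<delta>"
    proof (cases "K = {}")
      case True then show ?thesis using that[of 1] by simp
    next
      case False
      have "continuous_on K (\<lambda>p. \<bar>fst p\<bar>)" by (intro continuous_intros)
      then obtain p0 where p0: "p0 \<in> K" "\<And>p. p \<in> K \<Longrightarrow> \<bar>fst p\<bar> \<le> \<bar>fst p0\<bar>"
        using continuous_attains_sup[OF cK False] by blast
      show ?thesis using that[of "1 - \<bar>fst p0\<bar>"] gap[OF p0(1)] p0 by simp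
    qed
    define c where "c = min \<mu> (\<delta> / 2)"
    have c: "0 < c" "c \<le> \<mu>" "c \<le> \<delta> / 2" using \<mu> \<delta> unfolding c_def by auto
    have unit: "norm (\<phi> u *\<^sub>R y + (s * (c * \<beta> u)) *\<^sub>R w0) \<le> 1" if "norm u = 1" "\<bar>s\<bar> \<le> 1" for u s
    proof (cases "dist x u < r \<or> dist (- x) u < r")
      case True
      then have LL: "norm (\<phi> u *\<^sub>R y + (\<beta> u * \<mu>) *\<^sub>R w0) \<le> 1" "norm (\<phi> u *\<^sub>R y - (\<beta> u * \<mu>) *\<^sub>R w0) \<le> 1"
        using loc2 that by auto
      have "\<bar>s\<bar> * c \<le> 1 * c" by (rule mult_right_mono) (use that c in auto)
      then have "\<bar>s\<bar> * c \<le> \<mu>" using c by linarith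
      then have ab1: "\<bar>s * c / \<mu>\<bar> \<le> 1" using c \<mu> by (simp add: abs_mult)
      have eqX: "(s * c / \<mu>) *\<^sub>R ((\<beta> u * \<mu>) *\<^sub>R w0) = (s * (c * \<beta> u)) *\<^sub>R w0" using \<mu> by simp
      from conv_pm[OF LL ab1]
      show ?thesis by (simp only: eqX)
    next
      case False
      have "(\<phi> u, \<beta> u) \<in> K" unfolding K_def
        using False phib[of u] bb[of u] that brep'[of u] by (auto simp: L_def abs_le_iff)
      then have "\<bar>\<phi> u\<bar> \<le> 1 - \<delta>" using \<delta>(2) by force
      have "norm (\<phi> u *\<^sub>R y + (s * (c * \<beta> u)) *\<^sub>R w0) \<le> norm (\<phi> u *\<^sub>R y) + norm ((s * (c * \<beta> u)) *\<^sub>R w0)"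
        by (rule norm_triangle_ineq)
      also have "\<dots> = \<bar>\<phi> u\<bar> + \<bar>s\<bar> * c * \<bar>\<beta> u\<bar>" using ny' nw0 c by (simp add: abs_mult)
      also have "\<dots> \<le> (1 - \<delta>) + 1 * c * 2"
        using \<open>\<bar>\<phi> u\<bar> \<le> 1 - \<delta>\<close> that bb[of u] c
        by (intro add_mono mult_mono) auto
      also have "\<dots> \<le> 1" using c by simp
      finally show ?thesis .
    qed
    have allu: "norm (\<phi> u *\<^sub>R y + (s * (c * \<beta> u)) *\<^sub>R w0) \<le> 1 * norm u" if "\<bar>s\<bar> \<le> 1" for u s
    proof (cases "u = 0")
      case True then show ?thesis by (simp add: \<phi>.zero \<beta>.zero)
    next
      case False
      define u' where "u' = u /\<^sub>R norm u"
      have nu': "norm u' = 1" using False unfolding u'_def by simp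
      have uu: "u = norm u *\<^sub>R u'" using False unfolding u'_def by simp
      have "\<phi> u *\<^sub>R y + (s * (c * \<beta> u)) *\<^sub>R w0 = norm u *\<^sub>R (\<phi> u' *\<^sub>R y + (s * (c * \<beta> u')) *\<^sub>R w0)"
        by (subst (1 2) uu) (simp add: \<phi>.scaleR \<beta>.scale algebra_simps)
      then have "norm (\<phi> u *\<^sub>R y + (s * (c * \<beta> u)) *\<^sub>R w0) = norm u * norm (\<phi> u' *\<^sub>R y + (s * (c * \<beta> u')) *\<^sub>R w0)"
        by simp
      also have "\<dots> \<le> norm u * 1" using unit[OF nu' that] by (intro mult_left_mono) auto
      finally show ?thesis by simp
    qed
    define Sf where "Sf u = (c * \<beta> u) *\<^sub>R w0" for u
    have blS: "bounded_linear Sf"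
    proof (rule bounded_linear_intro[where K="2 * c"])
      show "Sf (u + v) = Sf u + Sf v" for u v unfolding Sf_def by (simp add: \<beta>.add algebra_simps)
      show "Sf (r *\<^sub>R u) = r *\<^sub>R Sf u" for r u unfolding Sf_def by (simp add: \<beta>.scale)
      show "norm (Sf u) \<le> norm u * (2 * c)" for u
        unfolding Sf_def using bb[of u] c nw0 by (simp add: abs_mult mult_left_mono mult.commute mult.left_commute)
    qed
    define S where "S = Blinfun Sf"
    have Sap: "blinfun_apply S u = (c * \<beta> u) *\<^sub>R w0" for u
      unfolding S_def using bounded_linear_Blinfun_apply[OF blS] Sf_def by simp
    have n1: "norm (T + S) \<le> 1"
    proof (rule norm_blinfun_bound)
      show "norm (blinfun_apply (T + S) u) \<le> 1 * norm u" for u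
        using allu[of 1 u] by (simp add: blinfun.add_left TT Sap)
    qed simp
    have n2: "norm (T - S) \<le> 1"
    proof (rule norm_blinfun_bound)
      show "norm (blinfun_apply (T - S) u) \<le> 1 * norm u" for u
        using allu[of "-1" u] by (simp add: blinfun.diff_left TT Sap)
    qed simp
    have S0: "S \<noteq> 0"
    proof
      assume "S = 0"
      then have "blinfun_apply S z0 = 0" by simp
      then show False using Sap[of z0] bz c nw0 by auto
    qed
    have "T = midpoint (T - S) (T + S)" unfolding midpoint_def by (simp add: scaleR_2[symmetric] algebra_simps)
    moreover have "T - S \<noteq> T + S"
    proof
      assume eq: "T - S = T + S"
      have "(T + S) - (T - S) = 2 *\<^sub>R S" by (simp add: scaleR_2)
      then show False using eq S0 by simp
    qed
    ultimately have "T \<in> open_segment (T - S) (T + S)" using midpoint_in_open_segment by metis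
    moreover have "T - S \<in> cball 0 1" "T + S \<in> cball 0 1" using n1 n2 by auto
    ultimately show ?thesis unfolding extreme_point_of_def by blast
  qed
  show ?thesis using notext_cpp cpp_notext unfolding y_def by blast
qed

end
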